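(* Let $p_{Y|X}p_X$ define a finite IB problem. The IB curve has a linear segment at $\beta=1$, i.e., there is a nondegenerate interval of $I_X$-values on which the IB curve $I_Y(I_X)$ is affine with slope $1/\beta=1$, if and only if the joint distribution $p_{Y|X}p_X$ decomposes.
   Context: $\mathcal{X},\mathcal{Y}$ are finite sets and $p(x,y)=p(y|x)p(x)$ is a joint distribution with $p(x)>0$. The IB curve is $I_Y(I_X):=\max\{I(Y;\hat X): I(X;\hat X)\le I_X\}$, the maximum taken over all random variables $\hat X$ on finite alphabets forming a Markov chain $Y\leftrightarrow X\leftrightarrow\hat X$ (i.e., over encoders $p(\hat x|x)$). A matrix decomposes if, after permuting its rows and columns, it can be written non-trivially as a block (diagonal) matrix with at least two blocks; here the matrix is the $|\mathcal{X}|\times|\mathcal{Y}|$ matrix $(p(y|x)p(x))_{x,y}$. *)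

theory Defs
  imports Complex_Main
begin

definition mutual_info :: "'a set \<Rightarrow> 'b set \<Rightarrow> ('a \<Rightarrow> 'b \<Rightarrow> real) \<Rightarrow> real" where
  "mutual_info A B J =
     (\<Sum>a\<in>A. \<Sum>b\<in>B. if J a b = 0 then 0
        else J a b * ln (J a b / ((\<Sum>b'\<in>B. J a b') * (\<Sum>a'\<in>A. J a' b))))"

text \<open>An encoder p(xhat|x): the alphabet of Xhat is the finite set {..<k} of naturals.\<close>
definition encoder :: "nat \<Rightarrow> ('x::finite \<Rightarrow> nat \<Rightarrow> real) \<Rightarrow> bool" where
  "encoder k q \<longleftrightarrow> (\<forall>x t. 0 \<le> q x t) \<and> (\<forall>x. (\<Sum>t<k. q x t) = 1)"

definition IXT :: "('x::finite \<Rightarrow> 'y::finite \<Rightarrow> real) \<Rightarrow> nat \<Rightarrow> ('x \<Rightarrow> nat \<Rightarrow> real) \<Rightarrow> real" where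
  "IXT p k q = mutual_info (UNIV::'x set) {..<k} (\<lambda>x t. (\<Sum>y\<in>UNIV. p x y) * q x t)"

text \<open>I(Y;Xhat) under the Markov chain Y -- X -- Xhat.\<close>
definition IYT :: "('x::finite \<Rightarrow> 'y::finite \<Rightarrow> real) \<Rightarrow> nat \<Rightarrow> ('x \<Rightarrow> nat \<Rightarrow> real) \<Rightarrow> real" where
  "IYT p k q = mutual_info (UNIV::'y set) {..<k} (\<lambda>y t. \<Sum>x\<in>UNIV. p x y * q x t)"

text \<open>The IB curve I_Y(I_X) = max { I(Y;Xhat) : I(X;Xhat) \<le> I_X } (written as Sup;
  the maximum is attained).\<close>
definition IB_curve :: "('x::finite \<Rightarrow> 'y::finite \<Rightarrow> real) \<Rightarrow> real \<Rightarrow> real" where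
  "IB_curve p IX = Sup {IYT p k q | k q. encoder k q \<and> IXT p k q \<le> IX}"

definition IB_problem :: "('x::finite \<Rightarrow> 'y::finite \<Rightarrow> real) \<Rightarrow> bool" where
  "IB_problem p \<longleftrightarrow> (\<forall>x y. 0 \<le> p x y) \<and> (\<Sum>x\<in>UNIV. \<Sum>y\<in>UNIV. p x y) = 1
     \<and> (\<forall>x. 0 < (\<Sum>y\<in>UNIV. p x y))"

text \<open>A matrix M (rows indexed by 'x, columns by 'y) decomposes: after permuting rows
  and columns it is block diagonal with at least two blocks, i.e. rows and columns split
  into nonempty proper parts A, B such that all entries outside A\<times>B and (-A)\<times>(-B) vanish.\<close>
definition decomposes :: "('x \<Rightarrow> 'y \<Rightarrow> real) \<Rightarrow> bool" where
  "decomposes M \<longleftrightarrow> (\<exists>A B. A \<noteq> {} \<and> A \<noteq> UNIV \<and> B \<noteq> {} \<and> B \<noteq> UNIV \<and>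
      (\<forall>x y. M x y \<noteq> 0 \<longrightarrow> (x \<in> A \<longleftrightarrow> y \<in> B)))"

definition has_linear_segment_beta1 :: "('x::finite \<Rightarrow> 'y::finite \<Rightarrow> real) \<Rightarrow> bool" where
  "has_linear_segment_beta1 p \<longleftrightarrow> (\<exists>a b. 0 \<le> a \<and> a < b \<and>
      (\<forall>IX\<in>{a..b}. IB_curve p IX = IB_curve p a + (IX - a)))"

end

theory Submission
  imports Defs
begin

locale ibp =
  fixes p :: "'x::finite \<Rightarrow> 'y::finite \<Rightarrow> real"
  assumes ib: "IB_problem p"
begin

definition P :: "'x \<Rightarrow> real" where "P x = (\<Sum>y\<in>UNIV. p x y)"
definition PW :: "'y \<Rightarrow> real" where "PW y = (\<Sum>x\<in>UNIV. p x y)"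
definition abar :: "('x \<Rightarrow> real) \<Rightarrow> real" where "abar a = (\<Sum>x\<in>UNIV. P x * a x)"
definition Bf :: "('x \<Rightarrow> real) \<Rightarrow> 'y \<Rightarrow> real" where "Bf a y = (\<Sum>x\<in>UNIV. p x y * a x)"
definition Fc :: "('x \<Rightarrow> real) \<Rightarrow> real" where
  "Fc a = (\<Sum>x\<in>UNIV. if a x = 0 then 0 else P x * a x * ln (a x / abar a))"
definition Gc :: "('x \<Rightarrow> real) \<Rightarrow> real" where
  "Gc a = (\<Sum>y\<in>UNIV. if Bf a y = 0 then 0 else Bf a y * ln (Bf a y / (PW y * abar a)))"

lemma p_nonneg: "0 \<le> p x y" using ib by (simp add: IB_problem_def)
lemma P_pos: "0 < P x" using ib by (simp add: IB_problem_def P_def)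
lemma P_sum: "(\<Sum>x\<in>UNIV. P x) = 1" using ib by (simp add: IB_problem_def P_def)
lemma PW_nonneg: "0 \<le> PW y" by (simp add: PW_def sum_nonneg p_nonneg)

lemma IXT_col:
  assumes "encoder k q"
  shows "IXT p k q = (\<Sum>t<k. Fc (\<lambda>x. q x t))"
proof -
  have q1: "(\<Sum>t<k. q x t) = 1" for x using assms by (simp add: encoder_def)
  have r1: "(\<Sum>t'<k. P x * q x t') = P x" for x
    by (simp add: sum_distrib_left[symmetric] q1)
  have r2: "(\<Sum>x'\<in>UNIV. P x' * q x' t) = abar (\<lambda>x. q x t)" for t
    by (simp add: abar_def)
  have "IXT p k q = (\<Sum>x\<in>UNIV. \<Sum>t<k. if P x * q x t = 0 then 0 else
           P x * q x t * ln (P x * q x t / (P x * abar (\<lambda>x. q x t))))"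
    unfolding IXT_def mutual_info_def P_def[symmetric] r1 r2 ..
  also have "\<dots> = (\<Sum>x\<in>UNIV. \<Sum>t<k. if q x t = 0 then 0 else
           P x * q x t * ln (q x t / abar (\<lambda>x. q x t)))"
  proof (intro sum.cong refl)
    fix x t
    have "P x \<noteq> 0" using P_pos[of x] by simp
    then show "(if P x * q x t = 0 then 0 else P x * q x t * ln (P x * q x t / (P x * abar (\<lambda>x. q x t))))
       = (if q x t = 0 then 0 else P x * q x t * ln (q x t / abar (\<lambda>x. q x t)))"
      by simp
  qed
  also have "\<dots> = (\<Sum>t<k. Fc (\<lambda>x. q x t))"
    unfolding Fc_def by (rule sum.swap)
  finally show ?thesis .
qed

lemma IYT_col:
  assumes "encoder k q"
  shows "IYT p k q = (\<Sum>t<k. Gc (\<lambda>x. q x t))"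
proof -
  have q1: "(\<Sum>t<k. q x t) = 1" for x using assms by (simp add: encoder_def)
  have r1: "(\<Sum>t'<k. \<Sum>x\<in>UNIV. p x y * q x t') = PW y" for y
    by (subst sum.swap) (simp add: sum_distrib_left[symmetric] q1 PW_def)
  have r2: "(\<Sum>y'\<in>UNIV. \<Sum>x\<in>UNIV. p x y' * q x t) = abar (\<lambda>x. q x t)" for t
    by (subst sum.swap) (simp add: abar_def P_def sum_distrib_right)
  have "IYT p k q = (\<Sum>y\<in>UNIV. \<Sum>t<k. if Bf (\<lambda>x. q x t) y = 0 then 0 else
           Bf (\<lambda>x. q x t) y * ln (Bf (\<lambda>x. q x t) y / (PW y * abar (\<lambda>x. q x t))))"
    unfolding IYT_def mutual_info_def r1 r2 Bf_def ..
  also have "\<dots> = (\<Sum>t<k. Gc (\<lambda>x. q x t))"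
    unfolding Gc_def by (rule sum.swap)
  finally show ?thesis .
qed

end

context ibp begin

definition Dt :: "('x \<Rightarrow> real) \<Rightarrow> 'x \<Rightarrow> 'y \<Rightarrow> real" where
  "Dt a x y = (if p x y * a x = 0 then 0 else p x y * a x * ln (a x * PW y / Bf a y))"

lemma abar_ge: assumes "\<And>x. 0 \<le> a x" shows "P x * a x \<le> abar a"
proof -
  have "P x * a x = (\<Sum>x'\<in>{x}. P x' * a x')" by simp
  also have "\<dots> \<le> abar a" unfolding abar_def
    by (rule sum_mono2) (auto intro: mult_nonneg_nonneg less_imp_le[OF P_pos] assms)
  finally show ?thesis .
qed

lemma Bf_ge: assumes "\<And>x. 0 \<le> a x" shows "p x y * a x \<le> Bf a y"
proof -
  have "p x y * a x = (\<Sum>x'\<in>{x}. p x' y * a x')" by simp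
  also have "\<dots> \<le> Bf a y" unfolding Bf_def
    by (rule sum_mono2) (auto intro: mult_nonneg_nonneg p_nonneg assms)
  finally show ?thesis .
qed

lemma PW_ge: "p x y \<le> PW y"
  using Bf_ge[of "\<lambda>_. 1" x y] by (simp add: Bf_def PW_def)

lemma Bf_nonneg: assumes "\<And>x. 0 \<le> a x" shows "0 \<le> Bf a y"
  unfolding Bf_def by (auto intro!: sum_nonneg mult_nonneg_nonneg p_nonneg assms)

lemma abar_nonneg: assumes "\<And>x. 0 \<le> a x" shows "0 \<le> abar a"
  unfolding abar_def by (auto intro!: sum_nonneg mult_nonneg_nonneg less_imp_le[OF P_pos] assms)

lemma Fc_as: "Fc a = (\<Sum>y\<in>UNIV. \<Sum>x\<in>UNIV. if a x = 0 then 0 else p x y * a x * ln (a x / abar a))"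
proof -
  have "Fc a = (\<Sum>x\<in>UNIV. \<Sum>y\<in>UNIV. if a x = 0 then 0 else p x y * a x * ln (a x / abar a))"
    unfolding Fc_def P_def by (rule sum.cong[OF refl]) (simp add: sum_distrib_right)
  also have "\<dots> = (\<Sum>y\<in>UNIV. \<Sum>x\<in>UNIV. if a x = 0 then 0 else p x y * a x * ln (a x / abar a))"
    by (rule sum.swap)
  finally show ?thesis .
qed

lemma Gc_as: assumes a0: "\<And>x. 0 \<le> a x"
  shows "Gc a = (\<Sum>y\<in>UNIV. \<Sum>x\<in>UNIV. if p x y * a x = 0 then 0 else p x y * a x * ln (Bf a y / (PW y * abar a)))"
  unfolding Gc_def
proof (rule sum.cong[OF refl])
  fix y
  show "(if Bf a y = 0 then 0 else Bf a y * ln (Bf a y / (PW y * abar a))) =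
    (\<Sum>x\<in>UNIV. if p x y * a x = 0 then 0 else p x y * a x * ln (Bf a y / (PW y * abar a)))"
  proof (cases "Bf a y = 0")
    case True
    have nn: "\<And>x. x\<in>UNIV \<Longrightarrow> 0 \<le> p x y * a x" using p_nonneg a0 by (simp add: mult_nonneg_nonneg)
    have "\<forall>x\<in>UNIV. p x y * a x = 0"
      using True sum_nonneg_eq_0_iff[of UNIV "\<lambda>x. p x y * a x"] nn unfolding Bf_def by simp
    then show ?thesis using True by simp
  next
    case False
    have "Bf a y * ln (Bf a y / (PW y * abar a)) = (\<Sum>x\<in>UNIV. p x y * a x * ln (Bf a y / (PW y * abar a)))"
      unfolding Bf_def by (simp add: sum_distrib_right)
    also have "\<dots> = (\<Sum>x\<in>UNIV. if p x y * a x = 0 then 0 else p x y * a x * ln (Bf a y / (PW y * abar a)))"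
      by (rule sum.cong[OF refl]) simp
    finally show ?thesis using False by simp
  qed
qed

lemma FG_diff: assumes a0: "\<And>x. 0 \<le> a x"
  shows "Fc a - Gc a = (\<Sum>y\<in>UNIV. \<Sum>x\<in>UNIV. Dt a x y)"
proof -
  have "Fc a - Gc a = (\<Sum>y\<in>UNIV. \<Sum>x\<in>UNIV. (if a x = 0 then 0 else p x y * a x * ln (a x / abar a))
     - (if p x y * a x = 0 then 0 else p x y * a x * ln (Bf a y / (PW y * abar a))))"
    unfolding Fc_as Gc_as[OF a0] by (simp only: sum_subtractf)
  also have "\<dots> = (\<Sum>y\<in>UNIV. \<Sum>x\<in>UNIV. Dt a x y)"
  proof (intro sum.cong refl)
    fix x y
    show "(if a x = 0 then 0 else p x y * a x * ln (a x / abar a))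
     - (if p x y * a x = 0 then 0 else p x y * a x * ln (Bf a y / (PW y * abar a))) = Dt a x y"
    proof (cases "p x y * a x = 0")
      case True then show ?thesis by (auto simp: Dt_def)
    next
      case False
      then have pa: "p x y > 0" "a x > 0" using p_nonneg[of x y] a0[of x]
        by (auto simp: less_le)
      have pa2: "0 < p x y * a x" using pa by simp
      have B: "Bf a y > 0" using Bf_ge[of a, OF a0, of x y] pa2 by linarith
      have W: "PW y > 0" using PW_ge[of x y] pa by linarith
      have pa3: "0 < P x * a x" using pa P_pos[of x] by simp
      have A: "abar a > 0" using abar_ge[of a, OF a0, of x] pa3 by linarith
      have L: "ln (a x / abar a) - ln (Bf a y / (PW y * abar a)) = ln (a x * PW y / Bf a y)"
        using pa B W A by (simp add: ln_div ln_mult)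
      have "(if a x = 0 then 0 else p x y * a x * ln (a x / abar a))
        - (if p x y * a x = 0 then 0 else p x y * a x * ln (Bf a y / (PW y * abar a)))
        = p x y * a x * (ln (a x / abar a) - ln (Bf a y / (PW y * abar a)))"
        using False pa by (simp add: right_diff_distrib)
      also have "\<dots> = Dt a x y" using False by (simp only: L Dt_def if_False)
      finally show ?thesis .
    qed
  qed
  finally show ?thesis .
qed

end

lemma ln_lb: fixes u v :: real assumes "0 < u" "0 < v" shows "u - v \<le> u * ln (u / v)"
proof -
  have "ln (v / u) \<le> v / u - 1" using assms by (intro ln_le_minus_one) simp
  moreover have "ln (u / v) = - ln (v / u)" using assms by (simp add: ln_div)
  ultimately have "1 - v / u \<le> ln (u / v)" by simp
  then have "u * (1 - v / u) \<le> u * ln (u / v)" using assms by (intro mult_left_mono) auto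
  then show ?thesis using assms by (simp add: right_diff_distrib)
qed

lemma hell_lb: fixes u v M :: real assumes u: "0 < u" and v: "0 < v" and "u \<le> M" "v \<le> M"
  shows "u - v + (u - v)^2 / (4 * M) \<le> u * ln (u / v)"
proof -
  define su where "su = sqrt u"
  define sv where "sv = sqrt v"
  have su: "0 < su" "su^2 = u" using u by (auto simp: su_def)
  have sv: "0 < sv" "sv^2 = v" using v by (auto simp: sv_def)
  have q: "u / v = (su / sv)^2" using su sv by (simp add: power_divide)
  have "ln (u / v) = 2 * ln (su / sv)"
    unfolding q using su sv by (subst ln_realpow) auto
  have l1: "su - sv \<le> su * ln (su / sv)" using ln_lb[OF su(1) sv(1)] .
  have "2 * su * (su - sv) \<le> 2 * su * (su * ln (su / sv))"
    using l1 su by (intro mult_left_mono) auto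
  also have "\<dots> = u * ln (u / v)"
    using \<open>ln (u / v) = 2 * ln (su / sv)\<close> by (simp flip: su(2) add: power2_eq_square)
  finally have A: "2 * su * (su - sv) \<le> u * ln (u / v)" .
  have M: "0 < M" using assms by simp
  have e1: "2 * (su^2 + sv^2) - (su + sv)^2 = (su - sv)^2" by (simp add: power2_eq_square algebra_simps)
  have "(su + sv)^2 \<le> 2 * (su^2 + sv^2)" using e1 by (smt (verit) zero_le_power2)
  then have s4: "(su + sv)^2 \<le> 4 * M" using su sv assms by simp
  have "(su - sv)^2 * (su + sv)^2 \<le> (su - sv)^2 * (4 * M)"
    using s4 by (intro mult_left_mono) auto
  moreover have "(u - v)^2 = (su - sv)^2 * (su + sv)^2"
    by (simp flip: su(2) sv(2) add: power2_eq_square algebra_simps)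
  ultimately have B: "(u - v)^2 / (4 * M) \<le> (su - sv)^2"
    using M by (simp add: divide_le_eq)
  have C: "u - v + (su - sv)^2 = 2 * su * (su - sv)"
    by (simp flip: su(2) sv(2) add: power2_eq_square algebra_simps)
  show ?thesis using A B C by linarith
qed

context ibp begin

lemma PW0: "PW y = 0 \<Longrightarrow> p x y = 0"
  using PW_ge[of x y] p_nonneg[of x y] by simp

lemma Bf_PW: "Bf a y = PW y * (Bf a y / PW y)"
proof (cases "PW y = 0")
  case True
  then have "Bf a y = 0" unfolding Bf_def using PW0 by simp
  then show ?thesis by simp
qed simp

lemma Dt_lb1: assumes a0: "\<And>x. 0 \<le> a x"
  shows "p x y * (a x - Bf a y / PW y) \<le> Dt a x y"
proof (cases "p x y * a x = 0")
  case True
  have "Bf a y / PW y \<ge> 0" using Bf_nonneg[of a, OF a0] PW_nonneg by simp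
  have "0 \<le> p x y * (Bf a y / PW y)" using p_nonneg[of x y] \<open>Bf a y / PW y \<ge> 0\<close>
    by (rule mult_nonneg_nonneg)
  then have "p x y * (a x - Bf a y / PW y) \<le> 0"
    using True by (cases "p x y = 0") (auto simp: right_diff_distrib)
  then show ?thesis using True by (simp add: Dt_def)
next
  case False
  then have pa: "p x y > 0" "a x > 0" using p_nonneg[of x y] a0[of x]
    by (auto simp: less_le)
  have pa2: "0 < p x y * a x" using pa by simp
  have B: "Bf a y > 0" using Bf_ge[of a, OF a0, of x y] pa2 by linarith
  have W: "PW y > 0" using PW_ge[of x y] pa by linarith
  have v: "Bf a y / PW y > 0" using B W by simp
  have e: "a x * PW y / Bf a y = a x / (Bf a y / PW y)" by simp
  have "a x - Bf a y / PW y \<le> a x * ln (a x / (Bf a y / PW y))" by (rule ln_lb[OF pa(2) v])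
  then have "p x y * (a x - Bf a y / PW y) \<le> p x y * (a x * ln (a x / (Bf a y / PW y)))"
    using pa by (intro mult_left_mono) auto
  then show ?thesis using False unfolding Dt_def e by (simp add: mult.assoc)
qed

lemma sum_lin: "(\<Sum>y\<in>UNIV. \<Sum>x\<in>UNIV. p x y * (a x - Bf a y / PW y)) = 0"
proof -
  have "(\<Sum>x\<in>UNIV. p x y * (a x - Bf a y / PW y)) = 0" for y
  proof -
    have g: "(\<Sum>x\<in>UNIV. p x y * (a x - c)) = Bf a y - PW y * c" for c
      unfolding Bf_def PW_def by (simp add: right_diff_distrib sum_subtractf sum_distrib_right)
    have "(\<Sum>x\<in>UNIV. p x y * (a x - Bf a y / PW y)) = Bf a y - PW y * (Bf a y / PW y)"
      by (rule g)
    then show ?thesis using Bf_PW[of a y] by simp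
  qed
  then show ?thesis by simp
qed

lemma DPI: assumes a0: "\<And>x. 0 \<le> a x" shows "Gc a \<le> Fc a"
proof -
  have "0 = (\<Sum>y\<in>UNIV. \<Sum>x\<in>UNIV. p x y * (a x - Bf a y / PW y))" using sum_lin by simp
  also have "\<dots> \<le> (\<Sum>y\<in>UNIV. \<Sum>x\<in>UNIV. Dt a x y)"
    by (intro sum_mono Dt_lb1 a0)
  also have "\<dots> = Fc a - Gc a" using FG_diff[of a, OF a0] by simp
  finally show ?thesis by simp
qed

lemma sum_P_dev_gen: "(\<Sum>x\<in>UNIV. P x * (a x - c)) = abar a - c"
  unfolding abar_def by (simp add: right_diff_distrib sum_subtractf sum_distrib_right[symmetric] P_sum)

lemma sum_P_dev: "(\<Sum>x\<in>UNIV. P x * (a x - abar a)) = 0"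
  using sum_P_dev_gen[of a "abar a"] by simp

lemma Fc_nonneg: assumes a0: "\<And>x. 0 \<le> a x" shows "0 \<le> Fc a"
proof -
  have "(\<Sum>x\<in>UNIV. P x * (a x - abar a)) \<le> Fc a"
    unfolding Fc_def
  proof (intro sum_mono)
    fix x
    show "P x * (a x - abar a) \<le> (if a x = 0 then 0 else P x * a x * ln (a x / abar a))"
    proof (cases "a x = 0")
      case True then show ?thesis using abar_nonneg[of a, OF a0] P_pos[of x]
        by (simp add: mult_nonneg_nonneg)
    next
      case False
      then have ax: "a x > 0" using a0[of x] by (simp add: less_le)
      have "0 < P x * a x" using ax P_pos[of x] by simp
      then have ab: "abar a > 0" using abar_ge[of a, OF a0, of x] by linarith
      have "P x * (a x - abar a) \<le> P x * (a x * ln (a x / abar a))"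
        using ln_lb[OF ax ab] P_pos[of x] by (intro mult_left_mono) auto
      then show ?thesis using False by (simp add: mult.assoc)
    qed
  qed
  then show ?thesis using sum_P_dev[of a] by simp
qed

lemma Fc_chi: assumes a0: "\<And>x. 0 \<le> a x" and ab: "abar a > 0"
  shows "Fc a \<le> (\<Sum>x\<in>UNIV. P x * (a x - abar a)^2) / abar a"
proof -
  have "Fc a \<le> (\<Sum>x\<in>UNIV. P x * (a x - abar a)^2 / abar a + P x * (a x - abar a))"
    unfolding Fc_def
  proof (intro sum_mono)
    fix x
    have id: "P x * (a x - abar a)^2 / abar a + P x * (a x - abar a) = P x * a x * (a x / abar a - 1)"
      using ab by (simp add: field_simps power2_eq_square)
    show "(if a x = 0 then 0 else P x * a x * ln (a x / abar a)) \<le> P x * (a x - abar a)^2 / abar a + P x * (a x - abar a)"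
    proof (cases "a x = 0")
      case True then show ?thesis using ab P_pos[of x]
        by (simp add: power2_eq_square)
    next
      case False
      then have ax: "a x > 0" using a0[of x] by (simp add: less_le)
      have "ln (a x / abar a) \<le> a x / abar a - 1" using ax ab by (intro ln_le_minus_one) simp
      then have "P x * a x * ln (a x / abar a) \<le> P x * a x * (a x / abar a - 1)"
        using ax P_pos[of x] by (intro mult_left_mono) auto
      then show ?thesis using False id by simp
    qed
  qed
  also have "\<dots> = (\<Sum>x\<in>UNIV. P x * (a x - abar a)^2) / abar a"
    by (simp add: sum.distrib sum_P_dev sum_divide_distrib)
  finally show ?thesis .
qed

end

lemma spread:
  fixes p :: "'x::finite \<Rightarrow> 'y \<Rightarrow> real" and a :: "'x \<Rightarrow> real"
  assumes nd: "\<not> decomposes p" and rows: "\<And>x. \<exists>y. p x y \<noteq> 0"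
    and edge: "\<And>x x' y. p x y \<noteq> 0 \<Longrightarrow> p x' y \<noteq> 0 \<Longrightarrow> a x \<le> a x' + d"
  shows "a x \<le> a x' + real (card (UNIV::'x set)) * d"
proof -
  define m where "m = Min (range a)"
  have "m \<in> range a" unfolding m_def by (intro Min_in) auto
  then obtain x0 where x0: "a x0 = m" by auto
  have mn: "a x0 \<le> a z" for z unfolding x0 m_def by (intro Min_le) auto
  obtain y0 where "p x0 y0 \<noteq> 0" using rows by blast
  then have d0: "0 \<le> d" using edge[of x0 y0 x0] by simp
  define S where "S n = {x. a x \<le> a x0 + real n * d}" for n
  have step: "\<exists>x x'. x \<notin> S n \<and> x' \<in> S n \<and> (\<exists>y. p x y \<noteq> 0 \<and> p x' y \<noteq> 0)"
    if ne: "S n \<noteq> UNIV" for n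
  proof -
    define B where "B = {y. \<exists>x\<in>S n. p x y \<noteq> 0}"
    have x0S: "x0 \<in> S n" unfolding S_def using d0 by simp
    show ?thesis
    proof (cases "B = UNIV")
      case True
      obtain x where x: "x \<notin> S n" using ne by blast
      obtain y where y: "p x y \<noteq> 0" using rows by blast
      have "y \<in> B" using True by simp
      then obtain x' where "x' \<in> S n" "p x' y \<noteq> 0" unfolding B_def by blast
      then show ?thesis using x y by blast
    next
      case False
      have "B \<noteq> {}" unfolding B_def using x0S \<open>p x0 y0 \<noteq> 0\<close> by blast
      then obtain x y where xy: "p x y \<noteq> 0" "\<not> (x \<in> S n \<longleftrightarrow> y \<in> B)"
        using nd False ne x0S unfolding decomposes_def by blast
      then have "x \<notin> S n" "y \<in> B" unfolding B_def by auto
      then obtain x' where "x' \<in> S n" "p x' y \<noteq> 0" unfolding B_def by blast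
      then show ?thesis using xy \<open>x \<notin> S n\<close> by blast
    qed
  qed
  have claim: "S n = UNIV \<or> n + 1 \<le> card (S n)" for n
  proof (induction n)
    case 0
    have "x0 \<in> S 0" unfolding S_def by simp
    then have "S 0 \<noteq> {}" by blast
    then show ?case by (simp add: card_gt_0_iff Suc_le_eq)
  next
    case (Suc n)
    have sub: "S n \<subseteq> S (Suc n)" unfolding S_def using d0 by (auto simp: algebra_simps)
    show ?case
    proof (cases "S n = UNIV")
      case True then show ?thesis using sub by auto
    next
      case False
      with Suc.IH have c: "n + 1 \<le> card (S n)" by simp
      obtain x x' y where xx: "x \<notin> S n" "x' \<in> S n" "p x y \<noteq> 0" "p x' y \<noteq> 0"
        using step[OF False] by blast
      have "a x \<le> a x' + d" using edge xx by blast
      moreover have "a x' \<le> a x0 + real n * d" using xx unfolding S_def by simp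
      ultimately have "x \<in> S (Suc n)" unfolding S_def by (simp add: algebra_simps)
      then have "insert x (S n) \<subseteq> S (Suc n)" using sub by blast
      then have "card (insert x (S n)) \<le> card (S (Suc n))" by (intro card_mono) auto
      moreover have "card (insert x (S n)) = card (S n) + 1" using xx by simp
      ultimately show ?thesis using c by simp
    qed
  qed
  have "S (card (UNIV::'x set)) = UNIV"
  proof (rule ccontr)
    assume "S (card (UNIV::'x set)) \<noteq> UNIV"
    then have "card (UNIV::'x set) + 1 \<le> card (S (card (UNIV::'x set)))" using claim by blast
    moreover have "card (S (card (UNIV::'x set))) \<le> card (UNIV::'x set)" by (rule card_mono) auto
    ultimately show False by simp
  qed
  then have "x \<in> S (card (UNIV::'x set))" by blast
  then have "a x \<le> a x0 + real (card (UNIV::'x set)) * d" unfolding S_def by simp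
  then show ?thesis using mn[of x'] by simp
qed

context ibp begin

lemma Dt_lb2: assumes a0: "\<And>x. 0 \<le> a x" and aM: "\<And>x. a x \<le> M" and M: "0 < M"
  shows "p x y * (a x - Bf a y / PW y) + p x y * (a x - Bf a y / PW y)^2 / (4 * M) \<le> Dt a x y"
proof -
  define v where "v = Bf a y / PW y"
  have v0: "0 \<le> v" unfolding v_def using Bf_nonneg[of a, OF a0] PW_nonneg by simp
  have vM: "v \<le> M"
  proof (cases "PW y = 0")
    case True then show ?thesis using M by (simp add: v_def)
  next
    case False
    then have W: "PW y > 0" using PW_nonneg[of y] by simp
    have "Bf a y \<le> (\<Sum>x\<in>UNIV. p x y * M)" unfolding Bf_def
      by (intro sum_mono mult_left_mono aM p_nonneg)
    also have "\<dots> = M * PW y" by (simp add: PW_def sum_distrib_left mult.commute)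
    finally show ?thesis unfolding v_def using W by (simp add: divide_le_eq)
  qed
  show ?thesis
  proof (cases "p x y * a x = 0")
    case True
    show ?thesis
    proof (cases "p x y = 0")
      case True then show ?thesis by (simp add: Dt_def)
    next
      case False
      then have ax: "a x = 0" using True by simp
      have "v^2 \<le> 4 * M * v" using v0 vM M by (simp add: power2_eq_square mult_right_mono)
      then have "v^2 / (4 * M) \<le> v" using M by (simp add: divide_le_eq mult.commute)
      then have "p x y * (v^2 / (4 * M) - v) \<le> 0" using p_nonneg[of x y]
        by (simp add: mult_nonpos_nonneg mult_nonneg_nonpos)
      then show ?thesis using ax True unfolding Dt_def v_def[symmetric]
        by (simp add: algebra_simps)
    qed
  next
    case False
    then have pa: "p x y > 0" "a x > 0" using p_nonneg[of x y] a0[of x]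
      by (auto simp: less_le)
    have pa2: "0 < p x y * a x" using pa by simp
    have B: "Bf a y > 0" using Bf_ge[of a, OF a0, of x y] pa2 by linarith
    have W: "PW y > 0" using PW_ge[of x y] pa by linarith
    have vp: "v > 0" using B W by (simp add: v_def)
    have e: "a x * PW y / Bf a y = a x / v" by (simp add: v_def)
    have "a x - v + (a x - v)^2 / (4 * M) \<le> a x * ln (a x / v)"
      by (rule hell_lb[OF pa(2) vp aM vM])
    then have "p x y * (a x - v + (a x - v)^2 / (4 * M)) \<le> p x y * (a x * ln (a x / v))"
      using pa by (intro mult_left_mono) auto
    then show ?thesis using False unfolding Dt_def e v_def[symmetric]
      by (simp add: algebra_simps)
  qed
qed

lemma sdpi: assumes nd: "\<not> decomposes p"
  shows "\<exists>c>0. \<forall>a. (\<forall>x. 0 \<le> a x) \<longrightarrow> Gc a \<le> (1 - c) * Fc a"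
proof -
  define Sp where "Sp = (\<lambda>(x, y). p x y) ` {xy. p (fst xy) (snd xy) \<noteq> 0}"
  have rows: "\<exists>y. p x y \<noteq> 0" for x
  proof (rule ccontr)
    assume "\<not> (\<exists>y. p x y \<noteq> 0)"
    then have "P x = 0" by (simp add: P_def)
    then show False using P_pos[of x] by simp
  qed
  define pmin where "pmin = Min Sp"
  have Spfin: "finite Sp" unfolding Sp_def by simp
  have Spne: "Sp \<noteq> {}" unfolding Sp_def using rows by fastforce
  have pmin_le: "pmin \<le> p x y" if "p x y \<noteq> 0" for x y
    unfolding pmin_def using that Spfin by (intro Min_le) (auto simp: Sp_def image_iff intro!: bexI[of _ "(x, y)"])
  have pmin_pos: "0 < pmin"
  proof -
    have "pmin \<in> Sp" unfolding pmin_def using Spfin Spne by (rule Min_in)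
    then show ?thesis unfolding Sp_def using p_nonneg by (auto simp: less_le)
  qed
  define Pm where "Pm = Min (range P)"
  have Pm_le: "Pm \<le> P x" for x unfolding Pm_def by (intro Min_le) auto
  have Pm_pos: "0 < Pm"
  proof -
    have "Pm \<in> range P" unfolding Pm_def by (intro Min_in) auto
    then show ?thesis using P_pos by auto
  qed
  define N where "N = real (card (UNIV::'x set))"
  have N1: "1 \<le> N" unfolding N_def by (simp add: Suc_le_eq card_gt_0_iff)
  define c where "c = pmin * Pm / (16 * N^2)"
  have c0: "0 < c" unfolding c_def using pmin_pos Pm_pos N1 by simp
  have main: "Gc a \<le> (1 - c) * Fc a" if a0: "\<And>x. 0 \<le> a x" for a
  proof (cases "abar a = 0")
    case True
    have "a x = 0" for x using abar_ge[of a, OF a0, of x] True P_pos[of x] a0[of x]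
      by (smt (verit) mult_pos_pos)
    then have "Fc a = 0" by (simp add: Fc_def)
    then show ?thesis using DPI[of a, OF a0] by simp
  next
    case False
    then have ab: "abar a > 0" using abar_nonneg[of a, OF a0] by simp
    define b where "b y = Bf a y / PW y" for y
    define H where "H = (\<Sum>y\<in>UNIV. \<Sum>x\<in>UNIV. p x y * (a x - b y)^2)"
    define M where "M = abar a / Pm"
    have M0: "0 < M" unfolding M_def using ab Pm_pos by simp
    have aM: "a x \<le> M" for x
    proof -
      have "P x * a x \<le> abar a" by (rule abar_ge[of a, OF a0])
      moreover have "Pm * a x \<le> P x * a x" using Pm_le[of x] a0[of x] by (rule mult_right_mono)
      ultimately have "Pm * a x \<le> abar a" by linarith
      then show ?thesis unfolding M_def using Pm_pos by (simp add: le_divide_eq mult.commute)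
    qed
    have H0: "0 \<le> H" unfolding H_def by (intro sum_nonneg mult_nonneg_nonneg p_nonneg) simp
    have Dlow: "H / (4 * M) \<le> Fc a - Gc a"
    proof -
      have "(\<Sum>y\<in>UNIV. \<Sum>x\<in>UNIV. p x y * (a x - b y)) + H / (4 * M)
         = (\<Sum>y\<in>UNIV. \<Sum>x\<in>UNIV. p x y * (a x - b y) + p x y * (a x - b y)^2 / (4 * M))"
        unfolding H_def by (simp add: sum.distrib sum_divide_distrib)
      also have "\<dots> \<le> (\<Sum>y\<in>UNIV. \<Sum>x\<in>UNIV. Dt a x y)"
        unfolding b_def by (intro sum_mono Dt_lb2[OF a0 aM M0])
      also have "\<dots> = Fc a - Gc a" using FG_diff[of a, OF a0] by simp
      finally show ?thesis using sum_lin[of a] unfolding b_def by simp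
    qed
    define \<delta> where "\<delta> = sqrt (H / pmin)"
    have near: "\<bar>a x - b y\<bar> \<le> \<delta>" if pxy: "p x y \<noteq> 0" for x y
    proof -
      have t1: "p x y * (a x - b y)^2 \<le> (\<Sum>x\<in>UNIV. p x y * (a x - b y)^2)"
        by (rule member_le_sum) (auto intro: mult_nonneg_nonneg p_nonneg)
      have t2: "(\<Sum>x\<in>UNIV. p x y * (a x - b y)^2) \<le> H"
        unfolding H_def by (rule member_le_sum) (auto intro!: sum_nonneg mult_nonneg_nonneg p_nonneg)
      have "pmin * (a x - b y)^2 \<le> p x y * (a x - b y)^2"
        using pmin_le[OF pxy] by (intro mult_right_mono) auto
      then have "pmin * (a x - b y)^2 \<le> H" using t1 t2 by linarith
      then have "(a x - b y)^2 \<le> H / pmin" using pmin_pos by (simp add: le_divide_eq mult.commute)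
      then have "sqrt ((a x - b y)^2) \<le> \<delta>" unfolding \<delta>_def by (rule real_sqrt_le_mono)
      then show ?thesis by simp
    qed
    have edge: "a x \<le> a x' + 2 * \<delta>" if "p x y \<noteq> 0" "p x' y \<noteq> 0" for x x' y
      using near[OF that(1)] near[OF that(2)] by linarith
    have spr: "a x \<le> a x' + N * (2 * \<delta>)" for x x'
      unfolding N_def by (rule spread[OF nd rows edge])
    have dev: "\<bar>a x - abar a\<bar> \<le> N * (2 * \<delta>)" for x
    proof -
      have e1: "a x - abar a = (\<Sum>x'\<in>UNIV. P x' * (a x - a x'))"
        unfolding abar_def by (simp add: right_diff_distrib sum_subtractf sum_distrib_right[symmetric] P_sum)
      have "(\<Sum>x'\<in>UNIV. P x' * (a x - a x')) \<le> (\<Sum>x'\<in>UNIV. P x' * (N * (2 * \<delta>)))"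
        using spr by (intro sum_mono mult_left_mono) (auto intro: less_imp_le[OF P_pos] simp: algebra_simps)
      moreover have "(\<Sum>x'\<in>UNIV. P x' * (a x' - a x)) \<le> (\<Sum>x'\<in>UNIV. P x' * (N * (2 * \<delta>)))"
        using spr by (intro sum_mono mult_left_mono) (auto intro: less_imp_le[OF P_pos] simp: algebra_simps)
      moreover have "(\<Sum>x'\<in>UNIV. P x' * (a x' - a x)) = - (\<Sum>x'\<in>UNIV. P x' * (a x - a x'))"
        by (simp add: sum_negf[symmetric] algebra_simps)
      moreover have "(\<Sum>x'\<in>UNIV. P x' * (N * (2 * \<delta>))) = N * (2 * \<delta>)"
        by (simp add: sum_distrib_right[symmetric] P_sum)
      ultimately show ?thesis using e1 by linarith
    qed
    have d2: "\<delta>^2 = H / pmin" unfolding \<delta>_def using H0 pmin_pos by simp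
    have var: "(\<Sum>x\<in>UNIV. P x * (a x - abar a)^2) \<le> 4 * N^2 * H / pmin"
    proof -
      have "(a x - abar a)^2 \<le> (N * (2 * \<delta>))^2" for x
        using power_mono[OF dev[of x] abs_ge_zero, of 2] by simp
      also have "(N * (2 * \<delta>))^2 = 4 * N^2 * H / pmin" by (simp add: power_mult_distrib d2)
      finally have "(a x - abar a)^2 \<le> 4 * N^2 * H / pmin" for x .
      then have "(\<Sum>x\<in>UNIV. P x * (a x - abar a)^2) \<le> (\<Sum>x\<in>UNIV. P x * (4 * N^2 * H / pmin))"
        by (intro sum_mono mult_left_mono) (auto intro: less_imp_le[OF P_pos])
      also have "\<dots> = (\<Sum>x\<in>UNIV. P x) * (4 * N^2 * H / pmin)" by (rule sum_distrib_right[symmetric])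
      also have "\<dots> = 4 * N^2 * H / pmin" by (simp only: P_sum mult_1)
      finally show ?thesis .
    qed
    have Fup: "Fc a \<le> 4 * N^2 * H / pmin / abar a"
      using Fc_chi[of a, OF a0 ab] var ab by (smt (verit) divide_right_mono)
    have "c * Fc a \<le> c * (4 * N^2 * H / pmin / abar a)"
      using Fup c0 by (intro mult_left_mono) auto
    also have "\<dots> = H / (4 * M)"
      unfolding c_def M_def using pmin_pos Pm_pos N1 ab by (simp add: field_simps power2_eq_square)
    finally show ?thesis using Dlow by (simp add: algebra_simps)
  qed
  show ?thesis using c0 main by blast
qed

end

context ibp begin

lemma abar_scale: "abar (\<lambda>x. l * a x) = l * abar a"
  unfolding abar_def by (simp add: sum_distrib_left algebra_simps)

lemma Bf_scale: "Bf (\<lambda>x. l * a x) y = l * Bf a y"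
  unfolding Bf_def by (simp add: sum_distrib_left algebra_simps)

lemma Fc_scale: assumes "0 \<le> l" shows "Fc (\<lambda>x. l * a x) = l * Fc a"
proof (cases "l = 0")
  case True then show ?thesis by (simp add: Fc_def)
next
  case False
  then have l: "l > 0" using assms by simp
  show ?thesis unfolding Fc_def abar_scale sum_distrib_left
  proof (intro sum.cong refl)
    fix x
    have "ln (l * a x / (l * abar a)) = ln (a x / abar a)" using l by simp
    then show "(if l * a x = 0 then 0 else P x * (l * a x) * ln (l * a x / (l * abar a))) =
      l * (if a x = 0 then 0 else P x * a x * ln (a x / abar a))" using l by simp
  qed
qed

lemma Gc_scale: assumes "0 \<le> l" shows "Gc (\<lambda>x. l * a x) = l * Gc a"
proof (cases "l = 0")
  case True then show ?thesis by (simp add: Gc_def Bf_def)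
next
  case False
  then have l: "l > 0" using assms by simp
  show ?thesis unfolding Gc_def abar_scale Bf_scale sum_distrib_left
  proof (intro sum.cong refl)
    fix y
    have "l * Bf a y / (PW y * (l * abar a)) = Bf a y / (PW y * abar a)" using l by simp
    then show "(if l * Bf a y = 0 then 0 else l * Bf a y * ln (l * Bf a y / (PW y * (l * abar a)))) =
      l * (if Bf a y = 0 then 0 else Bf a y * ln (Bf a y / (PW y * abar a)))" using l by simp
  qed
qed

lemma Fc_const: "Fc (\<lambda>x. c) = 0"
proof -
  have a: "abar (\<lambda>x. c) = c" unfolding abar_def by (simp add: sum_distrib_right[symmetric] P_sum)
  have "Fc (\<lambda>x. c) = (\<Sum>x\<in>UNIV. if c = 0 then 0 else P x * c * ln (c / c))"
    unfolding Fc_def a ..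
  then show ?thesis by (cases "c = 0") simp_all
qed

lemma Gc_const: "Gc (\<lambda>x. c) = 0"
proof -
  have a: "abar (\<lambda>x. c) = c" unfolding abar_def by (simp add: sum_distrib_right[symmetric] P_sum)
  have b: "Bf (\<lambda>x. c) y = c * PW y" for y unfolding Bf_def PW_def by (simp add: sum_distrib_left mult.commute)
  show ?thesis unfolding Gc_def a b by (intro sum.neutral) (simp add: mult.commute)
qed

lemma enc_nonneg: "encoder k q \<Longrightarrow> 0 \<le> q x t" by (simp add: encoder_def)

lemma IXT_nonneg: "encoder k q \<Longrightarrow> 0 \<le> IXT p k q"
  by (simp add: IXT_col sum_nonneg Fc_nonneg enc_nonneg)

lemma IYT_le_IXT: "encoder k q \<Longrightarrow> IYT p k q \<le> IXT p k q"
  by (simp add: IXT_col IYT_col sum_mono DPI enc_nonneg)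

lemma sdpi_enc: assumes "\<not> decomposes p"
  shows "\<exists>c>0. c \<le> 1 \<and> (\<forall>k q. encoder k q \<longrightarrow> IYT p k q \<le> (1 - c) * IXT p k q)"
proof -
  obtain c where c: "c > 0" "\<And>a. (\<forall>x. 0 \<le> a x) \<Longrightarrow> Gc a \<le> (1 - c) * Fc a"
    using sdpi[OF assms] by blast
  define c' where "c' = min c 1"
  have c': "c' > 0" "c' \<le> 1" using c by (auto simp: c'_def)
  have g: "Gc a \<le> (1 - c') * Fc a" if "\<forall>x. 0 \<le> a x" for a
  proof -
    have "(1 - c) * Fc a \<le> (1 - c') * Fc a"
      using Fc_nonneg[of a] that by (intro mult_right_mono) (auto simp: c'_def)
    then show ?thesis using c(2)[OF that] by linarith
  qed
  have "IYT p k q \<le> (1 - c') * IXT p k q" if "encoder k q" for k q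
    unfolding IXT_col[OF that] IYT_col[OF that] sum_distrib_left
    by (intro sum_mono g) (simp add: enc_nonneg[OF that])
  then show ?thesis using c' by blast
qed

lemma erasure: assumes q: "encoder k q" and l: "0 \<le> l" "l \<le> 1"
  shows "\<exists>k' q'. encoder k' q' \<and> IXT p k' q' = l * IXT p k q \<and> IYT p k' q' = l * IYT p k q"
proof -
  define q' where "q' x t = (if t < k then l * q x t else if t = k then 1 - l else 0)" for x t
  have col: "(\<lambda>x. q' x t) = (\<lambda>x. l * q x t)" if "t < k" for t using that by (simp add: q'_def)
  have colk: "(\<lambda>x. q' x k) = (\<lambda>x. 1 - l)" by (simp add: q'_def)
  have enc: "encoder (Suc k) q'"
    unfolding encoder_def
  proof (intro conjI allI)
    fix x t show "0 \<le> q' x t" using l enc_nonneg[OF q] by (simp add: q'_def)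
  next
    fix x
    have "(\<Sum>t<Suc k. q' x t) = (\<Sum>t<k. l * q x t) + (1 - l)"
      by (simp add: q'_def)
    also have "\<dots> = 1" using q by (simp add: encoder_def sum_distrib_left[symmetric])
    finally show "(\<Sum>t<Suc k. q' x t) = 1" .
  qed
  have "IXT p (Suc k) q' = l * IXT p k q"
    unfolding IXT_col[OF enc] IXT_col[OF q] sum.lessThan_Suc colk Fc_const sum_distrib_left
    using l by (simp add: col Fc_scale)
  moreover have "IYT p (Suc k) q' = l * IYT p k q"
    unfolding IYT_col[OF enc] IYT_col[OF q] sum.lessThan_Suc colk Gc_const sum_distrib_left
    using l by (simp add: col Gc_scale)
  ultimately show ?thesis using enc by blast
qed

lemma trivial_enc: "encoder 1 (\<lambda>x t. 1)" "IXT p 1 (\<lambda>x t. 1) = 0" "IYT p 1 (\<lambda>x t. 1) = 0"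
proof -
  show e: "encoder 1 (\<lambda>x t. 1)" by (simp add: encoder_def)
  show "IXT p 1 (\<lambda>x t. 1) = 0" unfolding IXT_col[OF e] by (simp add: Fc_const)
  show "IYT p 1 (\<lambda>x t. 1) = 0" unfolding IYT_col[OF e] by (simp add: Gc_const)
qed

definition IBset where "IBset IX = {IYT p k q | k q. encoder k q \<and> IXT p k q \<le> IX}"

lemma IBset_bdd: "bdd_above (IBset IX)"
proof (rule bdd_aboveI[of _ IX])
  fix z assume "z \<in> IBset IX"
  then obtain k q where "z = IYT p k q" "encoder k q" "IXT p k q \<le> IX" unfolding IBset_def by blast
  then show "z \<le> IX" using IYT_le_IXT[of k q] by simp
qed

lemma IBset_ne: "0 \<le> IX \<Longrightarrow> IBset IX \<noteq> {}"
  unfolding IBset_def using trivial_enc by force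

lemma curve_le: assumes "0 \<le> IX" shows "IB_curve p IX \<le> IX"
  unfolding IB_curve_def IBset_def[symmetric]
  using IBset_ne[OF assms] by (rule cSup_least) (auto simp: IBset_def dest: IYT_le_IXT)

lemma curve_ge: assumes "encoder k q" "IXT p k q \<le> IX" shows "IYT p k q \<le> IB_curve p IX"
  unfolding IB_curve_def IBset_def[symmetric]
  by (rule cSup_upper[OF _ IBset_bdd]) (use assms in \<open>auto simp: IBset_def\<close>)

lemma curve_le_gen: assumes "0 \<le> IX" "\<And>k q. encoder k q \<Longrightarrow> IXT p k q \<le> IX \<Longrightarrow> IYT p k q \<le> z"
  shows "IB_curve p IX \<le> z"
  unfolding IB_curve_def IBset_def[symmetric]
  using IBset_ne[OF assms(1)] by (rule cSup_least) (auto simp: IBset_def intro: assms(2))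

end

context ibp begin

lemma ind_FG: assumes S: "\<And>x x' y. p x y \<noteq> 0 \<Longrightarrow> p x' y \<noteq> 0 \<Longrightarrow> (x \<in> S \<longleftrightarrow> x' \<in> S)"
  shows "Fc (\<lambda>x. if x \<in> S then 1 else 0) = Gc (\<lambda>x. if x \<in> S then 1 else 0)"
proof -
  define a where "a = (\<lambda>x. if x \<in> S then 1 else (0::real))"
  have a0: "\<And>x. 0 \<le> a x" by (simp add: a_def)
  have "Dt a x y = 0" for x y
  proof (cases "p x y * a x = 0")
    case True then show ?thesis by (simp add: Dt_def)
  next
    case False
    then have pxy: "p x y \<noteq> 0" and xS: "x \<in> S" by (auto simp: a_def split: if_splits)
    have "Bf a y = (\<Sum>x'\<in>UNIV. p x' y)" unfolding Bf_def
    proof (intro sum.cong refl)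
      fix x' show "p x' y * a x' = p x' y"
        using S[OF pxy, of x'] xS by (cases "p x' y = 0") (auto simp: a_def)
    qed
    then have B: "Bf a y = PW y" by (simp add: PW_def)
    have W: "PW y > 0" using PW_ge[of x y] p_nonneg[of x y] pxy by linarith
    show ?thesis using B W xS by (simp add: Dt_def a_def)
  qed
  then have "Fc a - Gc a = 0" using FG_diff[of a, OF a0] by simp
  then show ?thesis unfolding a_def by simp
qed

lemma ind_pos: assumes "A \<noteq> {}" "A \<noteq> UNIV"
  shows "0 < Fc (\<lambda>x. if x \<in> A then 1 else 0)"
proof -
  define a where "a = (\<lambda>x. if x \<in> A then 1 else (0::real))"
  have a0: "\<And>x. 0 \<le> a x" by (simp add: a_def)
  define h where "h = abar a"
  obtain x0 where x0: "x0 \<in> A" using assms by blast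
  obtain x1 where x1: "x1 \<notin> A" using assms by blast
  have h0: "0 < h" using abar_ge[of a, OF a0, of x0] P_pos[of x0] x0 by (simp add: h_def a_def)
  have "abar (\<lambda>x. 1 - a x) = 1 - h" unfolding abar_def h_def
    by (simp add: right_diff_distrib sum_subtractf P_sum)
  moreover have "P x1 * (1 - a x1) \<le> abar (\<lambda>x. 1 - a x)"
    by (rule abar_ge) (simp add: a_def)
  ultimately have h1: "h < 1" using P_pos[of x1] x1 by (simp add: a_def)
  have "Fc a = (\<Sum>x\<in>UNIV. P x * a x * ln (1 / h))" unfolding Fc_def h_def[symmetric]
    by (intro sum.cong refl) (simp add: a_def)
  also have "\<dots> = h * ln (1 / h)" unfolding h_def abar_def by (simp add: sum_distrib_right)
  finally have "Fc a = h * ln (1 / h)" .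
  moreover have "0 < ln (1 / h)" using h0 h1 by (simp add: ln_div)
  ultimately show ?thesis using h0 unfolding a_def by simp
qed

lemma decomp_seg: assumes "decomposes p" shows "has_linear_segment_beta1 p"
proof -
  obtain A B where AB: "A \<noteq> {}" "A \<noteq> UNIV" "B \<noteq> {}" "B \<noteq> UNIV"
    "\<And>x y. p x y \<noteq> 0 \<Longrightarrow> (x \<in> A \<longleftrightarrow> y \<in> B)"
    using assms unfolding decomposes_def by blast
  have SA: "p x y \<noteq> 0 \<Longrightarrow> p x' y \<noteq> 0 \<Longrightarrow> (x \<in> A \<longleftrightarrow> x' \<in> A)" for x x' y
    using AB(5)[of x y] AB(5)[of x' y] by blast
  have SA': "p x y \<noteq> 0 \<Longrightarrow> p x' y \<noteq> 0 \<Longrightarrow> (x \<in> -A \<longleftrightarrow> x' \<in> -A)" for x x' y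
    using SA[of x y x'] by blast
  define q0 where "q0 x (t::nat) = (if t = 0 then (if x \<in> A then 1 else 0)
     else if t = 1 then (if x \<in> -A then 1 else 0) else (0::real))" for x t
  have e: "encoder 2 q0" unfolding encoder_def q0_def by (auto simp: numeral_2_eq_2)
  have c0: "(\<lambda>x. q0 x 0) = (\<lambda>x. if x \<in> A then 1 else 0)" by (simp add: q0_def)
  have c1: "(\<lambda>x. q0 x (Suc 0)) = (\<lambda>x. if x \<in> -A then 1 else 0)" by (simp add: q0_def)
  have IX: "IXT p 2 q0 = Fc (\<lambda>x. if x \<in> A then 1 else 0) + Fc (\<lambda>x. if x \<in> -A then 1 else 0)"
    unfolding IXT_col[OF e] by (simp add: numeral_2_eq_2 c0 c1)
  have IY: "IYT p 2 q0 = Gc (\<lambda>x. if x \<in> A then 1 else 0) + Gc (\<lambda>x. if x \<in> -A then 1 else 0)"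
    unfolding IYT_col[OF e] by (simp add: numeral_2_eq_2 c0 c1)
  define b0 where "b0 = IXT p 2 q0"
  have eq: "IYT p 2 q0 = b0" unfolding b0_def IX IY using ind_FG[OF SA] ind_FG[OF SA'] by simp
  have "0 \<le> Fc (\<lambda>x. if x \<in> -A then 1 else 0)" by (rule Fc_nonneg) simp
  then have b0: "0 < b0" unfolding b0_def IX using ind_pos[OF AB(1,2)] by linarith
  have cur: "IB_curve p IX = IX" if "0 \<le> IX" "IX \<le> b0" for IX
  proof (rule antisym)
    show "IB_curve p IX \<le> IX" by (rule curve_le[OF that(1)])
    have l: "0 \<le> IX / b0" "IX / b0 \<le> 1" using that b0 by auto
    obtain k q where kq: "encoder k q" "IXT p k q = IX / b0 * IXT p 2 q0" "IYT p k q = IX / b0 * IYT p 2 q0"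
      using erasure[OF e l] by blast
    then have "IXT p k q = IX" "IYT p k q = IX" using b0 eq by (auto simp: b0_def)
    then show "IX \<le> IB_curve p IX" using curve_ge[OF kq(1)] by simp
  qed
  have "\<forall>IX\<in>{0..b0}. IB_curve p IX = IB_curve p 0 + (IX - 0)"
    using cur b0 by simp
  then show ?thesis unfolding has_linear_segment_beta1_def using b0 by blast
qed

lemma seg_decomp: assumes seg: "has_linear_segment_beta1 p" shows "decomposes p"
proof (rule ccontr)
  assume nd: "\<not> decomposes p"
  obtain c where c: "0 < c" "c \<le> 1" "\<And>k q. encoder k q \<Longrightarrow> IYT p k q \<le> (1 - c) * IXT p k q"
    using sdpi_enc[OF nd] by blast
  obtain a b where ab: "0 \<le> a" "a < b" "\<And>IX. IX \<in> {a..b} \<Longrightarrow> IB_curve p IX = IB_curve p a + (IX - a)"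
    using seg unfolding has_linear_segment_beta1_def by blast
  have b0: "0 < b" using ab by simp
  have up: "IB_curve p b \<le> (1 - c) * b"
  proof (rule curve_le_gen)
    show "0 \<le> b" using b0 by simp
    fix k q assume "encoder k q" "IXT p k q \<le> b"
    moreover have "(1 - c) * IXT p k q \<le> (1 - c) * b"
      using \<open>IXT p k q \<le> b\<close> c(2) by (intro mult_left_mono) auto
    ultimately show "IYT p k q \<le> (1 - c) * b"
      using c(3)[of k q] by linarith
  qed
  have cb: "IB_curve p b = IB_curve p a + (b - a)" using ab(3)[of b] ab(2) by simp
  have "b \<le> IB_curve p b"
  proof (cases "a = 0")
    case True
    have "0 \<le> IB_curve p 0" using curve_ge[OF trivial_enc(1)] trivial_enc by simp
    then show ?thesis using cb True by simp
  next
    case False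
    then have a0: "0 < a" using ab by simp
    define l where "l = a / b"
    have l: "0 < l" "l \<le> 1" using a0 ab by (auto simp: l_def)
    have "IB_curve p b \<le> IB_curve p a / l"
    proof (rule curve_le_gen)
      show "0 \<le> b" using b0 by simp
      fix k q assume kq: "encoder k q" "IXT p k q \<le> b"
      obtain k' q' where kq': "encoder k' q'" "IXT p k' q' = l * IXT p k q" "IYT p k' q' = l * IYT p k q"
        using erasure[OF kq(1), of l] l by auto
      have "l * IXT p k q \<le> l * b" using kq(2) l by (intro mult_left_mono) auto
      also have "l * b = a" using b0 by (simp add: l_def)
      finally have "IXT p k' q' \<le> a" unfolding kq'(2) .
      then have "l * IYT p k q \<le> IB_curve p a" using curve_ge[OF kq'(1)] kq'(3) by simp
      then show "IYT p k q \<le> IB_curve p a / l" using l by (simp add: le_divide_eq mult.commute)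
    qed
    then have "IB_curve p a + (b - a) \<le> IB_curve p a * b / a" using cb by (simp add: l_def)
    then have "(IB_curve p a + (b - a)) * a \<le> IB_curve p a * b" using a0 by (simp add: le_divide_eq)
    then have "(b - a) * a \<le> IB_curve p a * (b - a)" by (simp add: algebra_simps)
    then have "a * (b - a) \<le> IB_curve p a * (b - a)" by (simp add: mult.commute)
    moreover have "0 < b - a" using ab by simp
    ultimately have "a \<le> IB_curve p a" by (rule mult_right_le_imp_le)
    then show ?thesis using cb by simp
  qed
  moreover have "0 < c * b" using c(1) b0 by simp
  moreover have "(1 - c) * b = b - c * b" by (simp add: algebra_simps)
  ultimately show False using up by linarith
qed

end

theorem theorem3:
  fixes p :: "'x::finite \<Rightarrow> 'y::finite \<Rightarrow> real"
  assumes "IB_problem p"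
  shows "has_linear_segment_beta1 p \<longleftrightarrow> decomposes p"
proof -
  interpret ibp p by (unfold_locales) (rule assms)
  show ?thesis using decomp_seg seg_decomp by blast
qed

end
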